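(* Let $n$ and $0<n_1<\cdots<n_d<n$ be integers and let $\varepsilon:\mathrm{Flag}(n_1,\dots,n_d;n)\to\mathrm{O}(n)^d\subseteq(\mathbb{R}^{n\times n})^d$ be the classical embedding. Let $g^e$ be the Riemannian metric on $\mathrm{Flag}(n_1,\dots,n_d;n)$ induced by $\varepsilon$ from the Euclidean metric on $(\mathbb{R}^{n\times n})^d$, and $\tilde g^e$ the metric induced by the modified embedding $\tilde\varepsilon:\mathrm{Flag}(n_1,\dots,n_d;n)\to(\mathbb{R}^{n\times n})^{d+1}$ from the Euclidean metric on $(\mathbb{R}^{n\times n})^{d+1}$. For a smooth map $\varphi:(\mathbb{R}^{n\times n})^d\to\mathbb{R}^{n\times n}$, let $\kappa_\varphi(A_1,\dots,A_d)=(A_1,\dots,A_d,\varphi(A_1,\dots,A_d))$ and let $g^\varphi$ be the metric on $\mathrm{Flag}(n_1,\dots,n_d;n)$ induced by the embedding $\kappa_\varphi\circ\varepsilon$ from the Euclidean metric on $(\mathbb{R}^{n\times n})^{d+1}$. Then: (i) $g^\varphi=g^e$ if and only if $\varphi$ is constant on $\varepsilon(\mathrm{Flag}(n_1,\dots,n_d;n))$; in particular $g^\varphi=g^e$ whenever $\varphi$ is constant. (ii) There exists a smooth $\varphi$ such that $g^\varphi=\tilde g^e$.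
   Context: Set $m_1=n_1$, $m_k=n_k-n_{k-1}$ ($2\le k\le d$), $m_{d+1}=n-n_d$. For a flag $\mathbb{V}_1\subsetneq\cdots\subsetneq\mathbb{V}_d\subsetneq\mathbb{R}^n$ ($\dim\mathbb{V}_k=n_k$) let $\mathbb{W}_1=\mathbb{V}_1$, $\mathbb{W}_k$ the orthogonal complement of $\mathbb{V}_{k-1}$ in $\mathbb{V}_k$ ($2\le k\le d$), $\mathbb{W}_{d+1}=\mathbb{V}_d^\perp$, and $Q_k=2P_{\mathbb{W}_k}-I_n$ with $P_{\mathbb{W}}$ the orthogonal projection onto $\mathbb{W}$. The classical embedding is $\varepsilon(\text{flag})=(Q_1,\dots,Q_d)$ and the modified embedding is $\tilde\varepsilon(\text{flag})=(Q_1,\dots,Q_{d+1})$. The Euclidean metric on $(\mathbb{R}^{n\times n})^r$ is $\sum_k\operatorname{tr}(X_k^{\mathsf T}Y_k)$. *)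

theory Defs
  imports "HOL-Analysis.Analysis"
begin

(* C^infinity maps between finite-dimensional real normed spaces:
   f is differentiable everywhere and every directional derivative
   x \<mapsto> f'(x) v is again C^infinity (greatest fixed point). *)
coinductive smooth_map :: "('a::euclidean_space \<Rightarrow> 'b::euclidean_space) \<Rightarrow> bool" where
  "(\<And>x. (f has_derivative f' x) (at x)) \<Longrightarrow> (\<And>v. smooth_map (\<lambda>x. f' x v))
   \<Longrightarrow> smooth_map f"

definition orth_proj_vec :: "(real^'n) set \<Rightarrow> real^'n \<Rightarrow> real^'n" where
  "orth_proj_vec W x = (THE y. y \<in> W \<and> x - y \<in> orthogonal_comp W)"

definition proj_mat :: "(real^'n) set \<Rightarrow> real^'n^'n" where
  "proj_mat W = matrix (orth_proj_vec W)"

definition Qmat :: "(real^'n) set \<Rightarrow> real^'n^'n" where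
  "Qmat W = 2 *\<^sub>R proj_mat W - mat 1"

(* Flags V_1 \<subset> ... \<subset> V_d in R^n, indexed by the finite well-ordered type 'd
   (so d = CARD('d)), with dim V_k = ns k. *)
definition flags :: "('d::{finite,wellorder} \<Rightarrow> nat) \<Rightarrow> (('d::{finite,wellorder}) \<Rightarrow> (real^'n) set) set" where
  "flags ns = {V. (\<forall>k. subspace (V k) \<and> dim (V k) = ns k) \<and> (\<forall>j k. j < k \<longrightarrow> V j \<subset> V k)}"

definition Wsp :: "('d::{finite,wellorder} \<Rightarrow> (real^'n) set) \<Rightarrow> ('d::{finite,wellorder}) \<Rightarrow> (real^'n) set" where
  "Wsp V k = (if \<forall>j. \<not> j < k then V k else V k \<inter> orthogonal_comp (V (Max {j. j < k})))"

definition Wtop :: "('d::{finite,wellorder} \<Rightarrow> (real^'n) set) \<Rightarrow> (real^'n) set" where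
  "Wtop V = orthogonal_comp (V (Max UNIV))"

(* classical embedding into (R^{n x n})^d; the Euclidean inner product on
   real^'n^'n is tr(X^T Y) and on the 'd-fold power it is the sum *)
definition class_emb :: "('d::{finite,wellorder} \<Rightarrow> (real^'n) set) \<Rightarrow> (real^'n^'n)^('d::{finite,wellorder})" where
  "class_emb V = (\<chi> k. Qmat (Wsp V k))"

(* modified embedding into (R^{n x n})^d x R^{n x n} = (R^{n x n})^{d+1} *)
definition mod_emb :: "('d::{finite,wellorder} \<Rightarrow> (real^'n) set) \<Rightarrow> ((real^'n^'n)^('d::{finite,wellorder})) \<times> (real^'n^'n)" where
  "mod_emb V = (class_emb V, Qmat (Wtop V))"

definition kappa :: "((real^'n^'n)^('d::{finite,wellorder}) \<Rightarrow> real^'n^'n) \<Rightarrow> (real^'n^'n)^('d::{finite,wellorder}) \<Rightarrow> ((real^'n^'n)^('d::{finite,wellorder})) \<times> (real^'n^'n)" where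
  "kappa \<phi> A = (A, \<phi> A)"

(* Flag spanned by the column blocks of a matrix U (columns ordered by the
   well-order on 'n): V_k = span of the first ns k columns.  For U orthogonal
   this is the point U \<cdot> (standard flag) of Flag = O(n)/(O(m_1) x ... x O(m_{d+1})). *)
definition flag_of :: "('d::{finite,wellorder} \<Rightarrow> nat) \<Rightarrow> real^'n::{finite,wellorder}^('n::{finite,wellorder}) \<Rightarrow> ('d::{finite,wellorder}) \<Rightarrow> (real^('n::{finite,wellorder})) set" where
  "flag_of ns U = (\<lambda>k. span {column j U | j. card {i. i < j} < ns k})"

(* Smooth curves in the flag manifold: t \<mapsto> flag_of ns (U t) with U a smooth
   curve in O(n).  The squared length of the velocity of such a curve in the
   metric induced by an embedding emb: *)
definition induced_sqnorm ::
  "('d::{finite,wellorder} \<Rightarrow> nat) \<Rightarrow> ((('d::{finite,wellorder}) \<Rightarrow> (real^'n::{finite,wellorder}) set) \<Rightarrow> 'b::real_normed_vector)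
   \<Rightarrow> (real \<Rightarrow> real^('n::{finite,wellorder})^('n::{finite,wellorder})) \<Rightarrow> real \<Rightarrow> real" where
  "induced_sqnorm ns emb U t = (norm (vector_derivative (\<lambda>s. emb (flag_of ns (U s))) (at t)))\<^sup>2"

(* Two embeddings induce the same Riemannian metric on the flag manifold iff the
   induced quadratic forms agree on every tangent vector (polarization), i.e.
   along every smooth curve in the flag manifold. *)
definition same_metric ::
  "('d::{finite,wellorder} \<Rightarrow> nat) \<Rightarrow> ((('d::{finite,wellorder}) \<Rightarrow> (real^'n::{finite,wellorder}) set) \<Rightarrow> 'b::real_normed_vector)
   \<Rightarrow> ((('d::{finite,wellorder}) \<Rightarrow> (real^('n::{finite,wellorder})) set) \<Rightarrow> 'c::real_normed_vector) \<Rightarrow> bool" where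
  "same_metric ns e1 e2 \<longleftrightarrow>
     (\<forall>U. smooth_map U \<and> (\<forall>t. orthogonal_matrix (U t)) \<longrightarrow>
        (\<forall>t. induced_sqnorm ns e1 U t = induced_sqnorm ns e2 U t))"

end

theory Submission
  imports Defs
begin


lemma transpose_mv_col: "(transpose U *v x) $ j = column j U \<bullet> (x::real^'n)"
  by (simp add: matrix_vector_mult_def transpose_def column_def inner_vec_def mult.commute)

lemma orth_expand:
  fixes U :: "real^'n^'n"
  assumes "orthogonal_matrix U"
  shows "x = (\<Sum>a\<in>UNIV. (column a U \<bullet> x) *\<^sub>R column a U)"
proof -
  have "x = U *v (transpose U *v x)"
    by (metis assms matrix_vector_mul_assoc matrix_vector_mul_lid orthogonal_matrix_def)
  also have "\<dots> = (\<Sum>a\<in>UNIV. (transpose U *v x)$a *s column a U)"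
    by (rule matrix_mult_sum)
  also have "\<dots> = (\<Sum>a\<in>UNIV. (column a U \<bullet> x) *\<^sub>R column a U)"
    by (simp only: transpose_mv_col scalar_mult_eq_scaleR)
  finally show ?thesis .
qed

lemma orth_cols:
  fixes U :: "real^'n^'n"
  assumes "orthogonal_matrix U"
  shows "column i U \<bullet> column j U = (if i = j then 1 else 0)"
  using assms unfolding orthogonal_matrix_orthonormal_columns
  by (auto simp: orthogonal_def norm_eq_1)

lemma comp_span_iff:
  "x \<in> orthogonal_comp (span S) \<longleftrightarrow> (\<forall>s\<in>S. s \<bullet> x = 0)"
proof
  assume "x \<in> orthogonal_comp (span S)"
  then show "\<forall>s\<in>S. s \<bullet> x = 0" by (auto simp: orthogonal_comp_def orthogonal_def intro: span_base)
next
  assume h: "\<forall>s\<in>S. s \<bullet> x = 0"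
  have "y \<bullet> x = 0" if "y \<in> span S" for y
    using that
  proof (rule span_induct)
    show "\<And>y. y \<in> S \<Longrightarrow> y \<bullet> x = 0" using h by auto
    show "subspace {y. y \<bullet> x = 0}"
      by (auto simp: subspace_def inner_add_left)
  qed
  then show "x \<in> orthogonal_comp (span S)" by (auto simp: orthogonal_comp_def orthogonal_def)
qed

lemma comp_cols_iff:
  "x \<in> orthogonal_comp (span {column j U | j. P j}) \<longleftrightarrow> (\<forall>j. P j \<longrightarrow> column j U \<bullet> x = 0)"
  by (auto simp: comp_span_iff)

lemma mem_cols_iff:
  fixes U :: "real^'n^'n"
  assumes U: "orthogonal_matrix U"
  shows "x \<in> span {column j U | j. P j} \<longleftrightarrow> (\<forall>j. \<not> P j \<longrightarrow> column j U \<bullet> x = 0)"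
proof
  assume x: "x \<in> span {column j U | j. P j}"
  show "\<forall>j. \<not> P j \<longrightarrow> column j U \<bullet> x = 0"
  proof (intro allI impI)
    fix j assume "\<not> P j"
    then have "column j U \<in> orthogonal_comp (span {column j U | j. P j})"
      unfolding comp_cols_iff using orth_cols[OF U] by (auto simp: inner_commute)
    then show "column j U \<bullet> x = 0" using x
      by (auto simp: orthogonal_comp_def orthogonal_def inner_commute)
  qed
next
  assume h: "\<forall>j. \<not> P j \<longrightarrow> column j U \<bullet> x = 0"
  have "x = (\<Sum>a\<in>UNIV. (column a U \<bullet> x) *\<^sub>R column a U)" by (rule orth_expand[OF U])
  also have "\<dots> = (\<Sum>a\<in>{a. P a}. (column a U \<bullet> x) *\<^sub>R column a U)"
    using h by (intro sum.mono_neutral_right) auto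
  also have "\<dots> \<in> span {column j U | j. P j}"
    by (intro span_sum span_mul span_base) auto
  finally show "x \<in> span {column j U | j. P j}" .
qed

definition pm :: "real^'n^'n \<Rightarrow> ('n \<Rightarrow> bool) \<Rightarrow> real^'n^'n" where
  "pm U P = (\<chi> i j. \<Sum>a\<in>{a. P a}. U$i$a * U$j$a)"

lemma pm_mv: "pm U P *v x = (\<Sum>a\<in>{a. P a}. (column a U \<bullet> x) *\<^sub>R column a U)"
unfolding vec_eq_iff
proof
  fix i
  have "(pm U P *v x) $ i = (\<Sum>j\<in>UNIV. (\<Sum>a\<in>{a. P a}. U$i$a * U$j$a) * x$j)"
    by (simp add: pm_def matrix_vector_mult_def)
  also have "\<dots> = (\<Sum>j\<in>UNIV. \<Sum>a\<in>{a. P a}. U$i$a * U$j$a * x$j)"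
    by (simp add: sum_distrib_right)
  also have "\<dots> = (\<Sum>a\<in>{a. P a}. \<Sum>j\<in>UNIV. U$i$a * U$j$a * x$j)"
    by (rule sum.swap)
  also have "\<dots> = (\<Sum>a\<in>{a. P a}. (column a U \<bullet> x) * U$i$a)"
    by (simp add: inner_vec_def column_def sum_distrib_right sum_distrib_left mult_ac)
  also have "\<dots> = (\<Sum>a\<in>{a. P a}. (column a U \<bullet> x) *\<^sub>R column a U) $ i"
    by (simp add: sum_component column_def)
  finally show "(pm U P *v x) $ i = (\<Sum>a\<in>{a. P a}. (column a U \<bullet> x) *\<^sub>R column a U) $ i" .
qed

lemma orth_proj_cols:
  fixes U :: "real^'n^'n"
  assumes U: "orthogonal_matrix U"
  shows "orth_proj_vec (span {column j U | j. P j}) x = pm U P *v x"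
proof -
  let ?W = "span {column j U | j. P j}"
  have a: "pm U P *v x \<in> ?W \<and> x - pm U P *v x \<in> orthogonal_comp ?W"
  proof
    show "pm U P *v x \<in> ?W" unfolding pm_mv
      by (intro span_sum span_mul span_base) auto
    have "column j U \<bullet> (x - pm U P *v x) = 0" if "P j" for j
    proof -
      have "column j U \<bullet> (pm U P *v x) = (\<Sum>a\<in>{a. P a}. (column a U \<bullet> x) * (column j U \<bullet> column a U))"
        unfolding pm_mv by (simp only: inner_sum_right inner_scaleR_right)
      also have "\<dots> = (\<Sum>a\<in>{a. P a}. if j = a then column a U \<bullet> x else 0)"
        by (intro sum.cong refl) (simp add: orth_cols[OF U])
      also have "\<dots> = column j U \<bullet> x" using that by (simp add: sum.delta')
      finally show ?thesis by (simp add: inner_diff_right)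
    qed
    then show "x - pm U P *v x \<in> orthogonal_comp ?W" unfolding comp_cols_iff by auto
  qed
  show ?thesis
    unfolding orth_proj_vec_def
  proof (rule the_equality)
    show "pm U P *v x \<in> ?W \<and> x - pm U P *v x \<in> orthogonal_comp ?W" by (rule a)
    fix y assume y: "y \<in> ?W \<and> x - y \<in> orthogonal_comp ?W"
    have "y - pm U P *v x \<in> ?W" using y a by (meson span_diff)
    moreover have "y - pm U P *v x = (x - pm U P *v x) - (x - y)" by simp
    then have "y - pm U P *v x \<in> orthogonal_comp ?W" using y a
      by (metis (no_types, lifting) subspace_diff subspace_orthogonal_comp)
    ultimately show "y = pm U P *v x"
      using orthogonal_Int_0[of ?W] subspace_span by (metis (no_types, lifting) IntI eq_iff_diff_eq_0 singletonD)
  qed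
qed




definition ix :: "'n::{finite,wellorder} \<Rightarrow> nat" where "ix j = card {i. i < j}"

lemma ix_less: "i < j \<Longrightarrow> ix i < ix j"
  unfolding ix_def
  by (rule psubset_card_mono) auto

lemma ix_less_iff: "ix i < ix j \<longleftrightarrow> i < j"
  by (metis ix_less not_less_iff_gr_or_eq order_less_asym)

lemma ix_inj: "inj ix"
  by (metis injI ix_less less_irrefl neqE)

lemma ix_bound: "ix (j::'n::{finite,wellorder}) < CARD('n)"
  unfolding ix_def by (rule psubset_card_mono) auto

lemma ix_image: "ix ` (UNIV::'n::{finite,wellorder} set) = {..<CARD('n)}"
proof (rule card_subset_eq)
  show "ix ` (UNIV::'n set) \<subseteq> {..<CARD('n)}" using ix_bound by auto
  show "card (ix ` (UNIV::'n set)) = card {..<CARD('n)}"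
    using card_image[OF ix_inj] by simp
qed simp

lemma ix_surj: "m < CARD('n::{finite,wellorder}) \<Longrightarrow> \<exists>j::'n. ix j = m"
  using ix_image by (metis imageE lessThan_iff)

lemma card_ix_less: "m \<le> CARD('n::{finite,wellorder}) \<Longrightarrow> card {j::'n. ix j < m} = m"
proof -
  assume m: "m \<le> CARD('n)"
  have "ix ` {j::'n. ix j < m} = {..<m}"
    using ix_image m by (auto simp: image_iff)
  then have "card (ix ` {j::'n. ix j < m}) = m" by simp
  then show ?thesis using card_image[OF inj_on_subset[OF ix_inj]] by (metis subset_UNIV)
qed

lemma flag_of_ix: "flag_of ns (U::real^('n::{finite,wellorder})^('n::{finite,wellorder})) k = span {column j U | j. ix j < ns k}"
  by (simp add: flag_of_def ix_def)

lemma proj_mat_cols: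
  fixes U :: "real^'n^'n"
  assumes U: "orthogonal_matrix U"
  shows "proj_mat (span {column j U | j. P j}) = pm U P"
proof -
  have "orth_proj_vec (span {column j U | j. P j}) = (\<lambda>x. pm U P *v x)"
    by (rule ext) (rule orth_proj_cols[OF U])
  then show ?thesis unfolding proj_mat_def by simp
qed

definition blk :: "('d::{finite,wellorder} \<Rightarrow> nat) \<Rightarrow> 'd \<Rightarrow> 'n::{finite,wellorder} \<Rightarrow> bool" where
  "blk ns k j \<longleftrightarrow> ix j < ns k \<and> (\<forall>p. p < k \<longrightarrow> ns p \<le> ix j)"

lemma Wsp_flag:
  fixes U :: "real^('n::{finite,wellorder})^('n::{finite,wellorder})" and ns :: "'d::{finite,wellorder} \<Rightarrow> nat"
  assumes U: "orthogonal_matrix U" and ns: "strict_mono ns"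
  shows "Wsp (flag_of ns U) k = span {column j U | j. blk ns k j}"
proof (cases "\<forall>j. \<not> j < k")
  case True
  then show ?thesis by (simp add: Wsp_def flag_of_ix blk_def)
next
  case False
  define p0 where "p0 = Max {j. j < k}"
  have p0: "p0 < k" "\<And>p. p < k \<Longrightarrow> p \<le> p0"
    using False unfolding p0_def by (auto intro: Max_ge)
  have mono: "\<And>p. p < k \<Longrightarrow> ns p \<le> ns p0"
    using p0 ns by (metis strict_mono_less_eq)
  have W: "Wsp (flag_of ns U) k = flag_of ns U k \<inter> orthogonal_comp (flag_of ns U p0)"
    unfolding Wsp_def p0_def using False by (subst if_not_P) auto
  have "x \<in> Wsp (flag_of ns U) k \<longleftrightarrow> x \<in> span {column j U | j. blk ns k j}" for x
  proof -
    have "x \<in> Wsp (flag_of ns U) k \<longleftrightarrow>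
       (\<forall>j. \<not> ix j < ns k \<longrightarrow> column j U \<bullet> x = 0) \<and> (\<forall>j. ix j < ns p0 \<longrightarrow> column j U \<bullet> x = 0)"
      unfolding W by (simp add: flag_of_ix mem_cols_iff[OF U] comp_cols_iff)
    also have "\<dots> \<longleftrightarrow> (\<forall>j. \<not> blk ns k j \<longrightarrow> column j U \<bullet> x = 0)"
      unfolding blk_def using p0 mono by (meson not_le order_le_less_trans)
    also have "\<dots> \<longleftrightarrow> x \<in> span {column j U | j. blk ns k j}"
      by (simp add: mem_cols_iff[OF U])
    finally show ?thesis .
  qed
  then show ?thesis by blast
qed

lemma Wtop_flag:
  fixes U :: "real^('n::{finite,wellorder})^('n::{finite,wellorder})" and ns :: "'d::{finite,wellorder} \<Rightarrow> nat"
  assumes U: "orthogonal_matrix U"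
  shows "Wtop (flag_of ns U) = span {column j U | j. \<not> ix j < ns (Max UNIV)}"
proof -
  have "x \<in> Wtop (flag_of ns U) \<longleftrightarrow> x \<in> span {column j U | j. \<not> ix j < ns (Max UNIV)}" for x
    by (simp add: Wtop_def flag_of_ix mem_cols_iff[OF U] comp_cols_iff)
  then show ?thesis by blast
qed

lemma class_emb_flag:
  fixes U :: "real^('n::{finite,wellorder})^('n::{finite,wellorder})" and ns :: "'d::{finite,wellorder} \<Rightarrow> nat"
  assumes U: "orthogonal_matrix U" and ns: "strict_mono ns"
  shows "class_emb (flag_of ns U) = (\<chi> k. 2 *\<^sub>R pm U (blk ns k) - mat 1)"
  by (simp add: class_emb_def Qmat_def Wsp_flag[OF U ns] proj_mat_cols[OF U])

lemma Qtop_flag: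
  fixes U :: "real^('n::{finite,wellorder})^('n::{finite,wellorder})" and ns :: "'d::{finite,wellorder} \<Rightarrow> nat"
  assumes U: "orthogonal_matrix U"
  shows "Qmat (Wtop (flag_of ns U)) = 2 *\<^sub>R pm U (\<lambda>j. \<not> ix j < ns (Max UNIV)) - mat 1"
  by (simp add: Qmat_def Wtop_flag[OF U] proj_mat_cols[OF U])




lemma blk_set:
  fixes ns :: "'d::{finite,wellorder} \<Rightarrow> nat" and a :: "'n::{finite,wellorder}"
  assumes ns: "strict_mono ns"
  shows "{k. blk ns k a} = (if ix a < ns (Max UNIV) then {LEAST k. ix a < ns k} else {})"
proof (cases "ix a < ns (Max UNIV)")
  case True
  define k0 where "k0 = (LEAST k. ix a < ns k)"
  have k0: "ix a < ns k0" unfolding k0_def by (rule LeastI[of _ "Max UNIV"]) (rule True)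
  have k0m: "\<And>p. p < k0 \<Longrightarrow> \<not> ix a < ns p" unfolding k0_def by (rule not_less_Least)
  have "blk ns k a \<longleftrightarrow> k = k0" for k
  proof
    assume b: "blk ns k a"
    then have "k0 \<le> k" unfolding k0_def blk_def by (auto intro: Least_le)
    moreover have "\<not> k0 < k" using b k0 unfolding blk_def by (meson not_le)
    ultimately show "k = k0" by simp
  next
    assume "k = k0"
    then show "blk ns k a" using k0 k0m unfolding blk_def by (meson not_le)
  qed
  then show ?thesis using True by (auto simp: k0_def)
next
  case False
  have "\<not> blk ns k a" for k
  proof
    assume "blk ns k a"
    then have "ix a < ns k" by (simp add: blk_def)
    moreover have "ns k \<le> ns (Max UNIV)" using ns by (simp add: strict_mono_less_eq)
    ultimately show False using False by simp
  qed
  then show ?thesis using False by auto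
qed

lemma blk_count:
  fixes ns :: "'d::{finite,wellorder} \<Rightarrow> nat" and a :: "'n::{finite,wellorder}"
  assumes ns: "strict_mono ns"
  shows "(\<Sum>k\<in>UNIV. if blk ns k a then 1 else 0 :: real) + (if \<not> ix a < ns (Max UNIV) then 1 else 0) = 1"
proof -
  have "(\<Sum>k\<in>UNIV. if blk ns k a then 1 else 0 :: real) = (\<Sum>k\<in>{k. blk ns k a}. 1)"
    by (simp add: sum.If_cases)
  also have "\<dots> = (if ix a < ns (Max UNIV) then 1 else 0)"
    by (simp add: blk_set[OF ns])
  finally show ?thesis by simp
qed

lemma pm_ind: "pm U P $ i $ j = (\<Sum>a\<in>UNIV. (if P a then 1 else 0) * (U$i$a * U$j$a))"
proof -
  have "(\<Sum>a\<in>UNIV. (if P a then 1 else 0) * (U$i$a * U$j$a)) = (\<Sum>a\<in>UNIV. if a \<in> {a. P a} then U$i$a * U$j$a else 0)"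
    by (rule sum.cong) auto
  also have "\<dots> = (\<Sum>a\<in>UNIV \<inter> {a. P a}. U$i$a * U$j$a)"
    by (rule sum.inter_restrict[symmetric]) simp
  finally show ?thesis by (simp add: pm_def)
qed

lemma pm_sum:
  fixes U :: "real^('n::{finite,wellorder})^('n::{finite,wellorder})" and ns :: "'d::{finite,wellorder} \<Rightarrow> nat"
  assumes U: "orthogonal_matrix U" and ns: "strict_mono ns"
  shows "(\<Sum>k\<in>UNIV. pm U (blk ns k)) + pm U (\<lambda>j. \<not> ix j < ns (Max UNIV)) = mat 1"
  unfolding vec_eq_iff
proof (intro allI)
  fix i j
  have "((\<Sum>k\<in>UNIV. pm U (blk ns k)) + pm U (\<lambda>j. \<not> ix j < ns (Max UNIV))) $ i $ j
     = (\<Sum>k\<in>UNIV. \<Sum>a\<in>UNIV. (if blk ns k a then 1 else 0) * (U$i$a * U$j$a))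
       + (\<Sum>a\<in>UNIV. (if \<not> ix a < ns (Max UNIV) then 1 else 0) * (U$i$a * U$j$a))"
    by (simp add: sum_component pm_ind)
  also have "\<dots> = (\<Sum>a\<in>UNIV. (\<Sum>k\<in>UNIV. if blk ns k a then 1 else 0) * (U$i$a * U$j$a))
       + (\<Sum>a\<in>UNIV. (if \<not> ix a < ns (Max UNIV) then 1 else 0) * (U$i$a * U$j$a))"
    by (subst sum.swap) (simp only: sum_distrib_right)
  also have "\<dots> = (\<Sum>a\<in>UNIV. ((\<Sum>k\<in>UNIV. if blk ns k a then 1 else 0) + (if \<not> ix a < ns (Max UNIV) then 1 else 0)) * (U$i$a * U$j$a))"
    by (simp only: sum.distrib distrib_right)
  also have "\<dots> = (\<Sum>a\<in>UNIV. U$i$a * U$j$a)"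
    by (simp only: blk_count[OF ns] mult_1)
  also have "\<dots> = (U ** transpose U) $ i $ j"
    by (simp add: matrix_matrix_mult_def transpose_def)
  also have "\<dots> = mat 1 $ i $ j"
    using U by (simp add: orthogonal_matrix_def)
  finally show "((\<Sum>k\<in>UNIV. pm U (blk ns k)) + pm U (\<lambda>j. \<not> ix j < ns (Max UNIV))) $ i $ j = mat 1 $ i $ j" .
qed

definition phi0 :: "(real^('n::{finite,wellorder})^('n::{finite,wellorder}))^('d::{finite,wellorder}) \<Rightarrow> real^('n::{finite,wellorder})^('n::{finite,wellorder})" where
  "phi0 A = (1 - real CARD('d)) *\<^sub>R mat 1 - (\<Sum>k\<in>UNIV. A $ k)"

lemma phi0_flag:
  fixes U :: "real^('n::{finite,wellorder})^('n::{finite,wellorder})" and ns :: "'d::{finite,wellorder} \<Rightarrow> nat"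
  assumes U: "orthogonal_matrix U" and ns: "strict_mono ns"
  shows "(kappa phi0 \<circ> class_emb) (flag_of ns U) = mod_emb (flag_of ns U)"
proof -
  let ?S = "\<Sum>k\<in>UNIV. pm U (blk ns k)"
  have S: "?S = mat 1 - pm U (\<lambda>j. \<not> ix j < ns (Max UNIV))"
    using pm_sum[OF U ns] by (simp add: algebra_simps eq_diff_eq)
  have "phi0 (class_emb (flag_of ns U)) = (1 - real CARD('d)) *\<^sub>R mat 1 - (\<Sum>k\<in>UNIV. 2 *\<^sub>R pm U (blk ns k) - mat 1)"
    by (simp add: phi0_def class_emb_flag[OF U ns])
  also have "\<dots> = (1 - real CARD('d)) *\<^sub>R mat 1 - (2 *\<^sub>R ?S - real CARD('d) *\<^sub>R mat 1)"
    by (simp add: sum_subtractf scaleR_sum_right scaleR_conv_of_real sum_distrib_left)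
  also have "\<dots> = Qmat (Wtop (flag_of ns U))"
    by (simp add: Qtop_flag[OF U] S algebra_simps scaleR_conv_of_real)
  finally show ?thesis by (simp add: kappa_def mod_emb_def)
qed




lemma smooth_affine:
  fixes l :: "'a::euclidean_space \<Rightarrow> 'b::euclidean_space"
  assumes "bounded_linear l" shows "smooth_map (\<lambda>x. c + l x)"
  using assms
proof (coinduction arbitrary: c l)
  case smooth_map
  show ?case
  proof (intro exI[of _ "\<lambda>x. c + l x"] exI[of _ "\<lambda>_. l"] conjI allI refl)
    fix x show "((\<lambda>x. c + l x) has_derivative l) (at x)"
    proof -
      have "(l has_derivative l) (at x)" using smooth_map by (rule bounded_linear_imp_has_derivative)
      from has_derivative_add[OF has_derivative_const this, of c] show ?thesis by simp
    qed
  next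
    fix v show "(\<exists>c' l'. (\<lambda>_. l v) = (\<lambda>x. c' + l' x) \<and> bounded_linear l') \<or> smooth_map (\<lambda>_. l v)"
      by (intro disjI1 exI[of _ "l v"] exI[of _ "\<lambda>_. 0"]) auto
  qed
qed

lemma trig_deriv:
  fixes A B C :: "'b::real_normed_vector"
  shows "((\<lambda>t. A + cos t *\<^sub>R B + sin t *\<^sub>R C) has_derivative (\<lambda>h. h *\<^sub>R (cos x *\<^sub>R C - sin x *\<^sub>R B))) (at x)"
  by (auto intro!: derivative_eq_intros simp: algebra_simps)

lemma smooth_trig:
  fixes A B C :: "'b::euclidean_space"
  shows "smooth_map (\<lambda>t::real. A + cos t *\<^sub>R B + sin t *\<^sub>R C)"
proof (coinduction arbitrary: A B C)
  case smooth_map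
  show ?case
  proof (intro exI[of _ "\<lambda>t. A + cos t *\<^sub>R B + sin t *\<^sub>R C"] exI[of _ "\<lambda>x h. h *\<^sub>R (cos x *\<^sub>R C - sin x *\<^sub>R B)"] conjI allI refl)
    fix x show "((\<lambda>t. A + cos t *\<^sub>R B + sin t *\<^sub>R C) has_derivative (\<lambda>h. h *\<^sub>R (cos x *\<^sub>R C - sin x *\<^sub>R B))) (at x)"
      by (rule trig_deriv)
  next
    fix v show "(\<exists>A' B' C'. (\<lambda>x. v *\<^sub>R (cos x *\<^sub>R C - sin x *\<^sub>R B)) = (\<lambda>t. A' + cos t *\<^sub>R B' + sin t *\<^sub>R C')) \<or> smooth_map (\<lambda>x. v *\<^sub>R (cos x *\<^sub>R C - sin x *\<^sub>R B))"
      by (intro disjI1 exI[of _ 0] exI[of _ "v *\<^sub>R C"] exI[of _ "- (v *\<^sub>R B)"] ext) (simp add: algebra_simps)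
  qed
qed

lemma smooth_phi0: "smooth_map (phi0 :: (real^('n::{finite,wellorder})^('n::{finite,wellorder}))^('d::{finite,wellorder}) \<Rightarrow> _)"
proof -
  have "bounded_linear (\<lambda>A::(real^('n::{finite,wellorder})^('n::{finite,wellorder}))^('d::{finite,wellorder}). - (\<Sum>k\<in>UNIV. A $ k))"
    by (intro bounded_linear_minus bounded_linear_sum bounded_linear_vec_nth)
  then have "smooth_map (\<lambda>A::(real^('n::{finite,wellorder})^('n::{finite,wellorder}))^('d::{finite,wellorder}). (1 - real CARD('d)) *\<^sub>R mat 1 + - (\<Sum>k\<in>UNIV. A $ k))"
    by (rule smooth_affine)
  moreover have "phi0 = (\<lambda>A::(real^('n::{finite,wellorder})^('n::{finite,wellorder}))^('d::{finite,wellorder}). (1 - real CARD('d)) *\<^sub>R mat 1 + - (\<Sum>k\<in>UNIV. A $ k))"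
    by (rule ext) (simp only: phi0_def diff_conv_add_uminus)
  ultimately show ?thesis by simp
qed




lemma vec_vd:
  fixes f :: "real \<Rightarrow> 'b::real_normed_vector^'i"
  assumes "\<And>i. ((\<lambda>x. f x $ i) has_vector_derivative d $ i) (at t)"
  shows "(f has_vector_derivative d) (at t)"
proof -
  from assms have c: "((\<lambda>y. (1 / norm (y - t)) *\<^sub>R ((f y $ i) - ((f t $ i) + (y - t) *\<^sub>R d $ i))) \<longlongrightarrow> 0) (at t)" for i
    unfolding has_vector_derivative_def has_derivative_within by simp
  have "((\<lambda>y. (1 / norm (y - t)) *\<^sub>R (f y - (f t + (y - t) *\<^sub>R d))) \<longlongrightarrow> 0) (at t)"
    by (rule vec_tendstoI) (use c in simp)
  then show ?thesis unfolding has_vector_derivative_def has_derivative_within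
    by (simp add: bounded_linear_scaleR_left)
qed

lemma vec_diff:
  fixes f :: "real \<Rightarrow> 'b::real_normed_vector^'i"
  assumes "\<And>i. (\<lambda>x. f x $ i) differentiable (at t)"
  shows "f differentiable (at t)"
proof -
  have "(f has_vector_derivative (\<chi> i. vector_derivative (\<lambda>x. f x $ i) (at t))) (at t)"
    by (rule vec_vd) (use assms in \<open>simp add: vector_derivative_works\<close>)
  then show ?thesis unfolding has_vector_derivative_def differentiable_def by blast
qed

lemma comp_diff:
  fixes U :: "real \<Rightarrow> real^'n^'m"
  assumes "U differentiable (at t)"
  shows "(\<lambda>s. U s $ i $ a) differentiable (at t)"
proof -
  have "bounded_linear (\<lambda>M::real^'n^'m. M $ i $ a)"
    by (rule bounded_linear_compose[OF bounded_linear_vec_nth bounded_linear_vec_nth])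
  then have "(\<lambda>M::real^'n^'m. M $ i $ a) differentiable (at (U t))"
    by (rule bounded_linear_imp_differentiable)
  from differentiable_compose[OF this assms] show ?thesis .
qed

lemma E_diff:
  fixes U :: "real \<Rightarrow> real^('n::{finite,wellorder})^('n::{finite,wellorder})" and ns :: "'d::{finite,wellorder} \<Rightarrow> nat"
  assumes U: "\<And>t. orthogonal_matrix (U t)" and dU: "\<And>x. U differentiable (at x)" and ns: "strict_mono ns"
  shows "(\<lambda>s. class_emb (flag_of ns (U s))) differentiable (at t)"
proof -
  have e: "(\<lambda>s. class_emb (flag_of ns (U s))) = (\<lambda>s. (\<chi> k. 2 *\<^sub>R pm (U s) (blk ns k) - mat 1))"
    by (rule ext) (rule class_emb_flag[OF U ns])
  show ?thesis unfolding e
    by (intro vec_diff) (simp add: pm_def comp_diff[OF dU])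
qed




lemma smooth_has_deriv:
  assumes "smooth_map f"
  obtains f' where "\<And>x. (f has_derivative f' x) (at x)"
  using assms by (cases rule: smooth_map.cases) blast

lemma smooth_diff: "smooth_map f \<Longrightarrow> f differentiable (at x)"
  by (metis smooth_has_deriv differentiable_def)

lemma vd_pair_const:
  fixes E :: "real \<Rightarrow> 'a::real_normed_vector" and c :: "'b::real_normed_vector"
  assumes "E differentiable (at t)"
  shows "norm (vector_derivative (\<lambda>s. (E s, c)) (at t)) = norm (vector_derivative E (at t))"
proof -
  have "(E has_vector_derivative vector_derivative E (at t)) (at t)"
    using assms by (simp add: vector_derivative_works)
  then have "((\<lambda>s. (E s, c)) has_vector_derivative (vector_derivative E (at t), 0)) (at t)"
    by (intro has_vector_derivative_Pair) auto
  then have "vector_derivative (\<lambda>s. (E s, c)) (at t) = (vector_derivative E (at t), 0)"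
    by (rule vector_derivative_at)
  then show ?thesis by simp
qed

lemma vd_pair_zero:
  fixes E :: "real \<Rightarrow> 'a::euclidean_space" and \<psi> :: "'a \<Rightarrow> 'b::euclidean_space"
  assumes sm: "smooth_map \<psi>" and dE: "E differentiable (at t)"
    and eq: "norm (vector_derivative (\<lambda>s. (E s, \<psi> (E s))) (at t)) = norm (vector_derivative E (at t))"
  shows "((\<lambda>s. \<psi> (E s)) has_vector_derivative 0) (at t)"
proof -
  obtain \<psi>' where d\<psi>: "\<And>x. (\<psi> has_derivative \<psi>' x) (at x)" using smooth_has_deriv[OF sm] by blast
  define E' where "E' = vector_derivative E (at t)"
  have vE: "(E has_vector_derivative E') (at t)"
    using dE by (simp add: vector_derivative_works E'_def)
  have bl: "bounded_linear (\<psi>' (E t))" using d\<psi> by (rule has_derivative_bounded_linear)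
  have "((\<lambda>s. \<psi> (E s)) has_derivative (\<lambda>h. \<psi>' (E t) (h *\<^sub>R E'))) (at t)"
    using diff_chain_at[OF vE[unfolded has_vector_derivative_def] d\<psi>[of "E t"]] by (simp add: o_def)
  moreover have "(\<lambda>h. \<psi>' (E t) (h *\<^sub>R E')) = (\<lambda>h. h *\<^sub>R \<psi>' (E t) E')"
    using bl by (simp add: linear_simps)
  ultimately have v\<psi>: "((\<lambda>s. \<psi> (E s)) has_vector_derivative \<psi>' (E t) E') (at t)"
    by (simp add: has_vector_derivative_def)
  have "((\<lambda>s. (E s, \<psi> (E s))) has_vector_derivative (E', \<psi>' (E t) E')) (at t)"
    by (rule has_vector_derivative_Pair[OF vE v\<psi>])
  then have "vector_derivative (\<lambda>s. (E s, \<psi> (E s))) (at t) = (E', \<psi>' (E t) E')"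
    by (rule vector_derivative_at)
  with eq have "sqrt ((norm E')\<^sup>2 + (norm (\<psi>' (E t) E'))\<^sup>2) = norm E'"
    by (simp add: norm_Pair E'_def)
  then have "(norm E')\<^sup>2 + (norm (\<psi>' (E t) E'))\<^sup>2 = (norm E')\<^sup>2"
    by (metis norm_ge_zero real_sqrt_eq_iff real_sqrt_pow2 sqrt_le_D zero_le_power2 add_nonneg_nonneg real_sqrt_unique)
  then have "\<psi>' (E t) E' = 0" by simp
  with v\<psi> show ?thesis by simp
qed

lemma zero_deriv_const:
  fixes g :: "real \<Rightarrow> 'b::real_normed_vector"
  assumes "\<And>t. (g has_vector_derivative 0) (at t)"
  shows "g a = g b"
proof -
  obtain c where "\<And>x. x \<in> UNIV \<Longrightarrow> g x = c"
    using has_vector_derivative_zero_constant[of UNIV g] assms by auto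
  then show ?thesis by simp
qed




lemma col_inj:
  fixes U :: "real^'n^'n"
  assumes U: "orthogonal_matrix U"
  shows "inj (\<lambda>j. column j U)"
proof (rule injI)
  fix i j assume "column i U = column j U"
  then have "column i U \<bullet> column j U = 1"
    using orth_cols[OF U, of j j] by simp
  then show "i = j" using orth_cols[OF U, of i j] by (auto split: if_splits)
qed

lemma dim_cols:
  fixes U :: "real^('n::{finite,wellorder})^('n::{finite,wellorder})"
  assumes U: "orthogonal_matrix U" and m: "m \<le> CARD('n)"
  shows "dim (span {column j U | j. ix j < m}) = m"
proof -
  have S: "{column j U | j. ix j < m} = (\<lambda>j. column j U) ` {j. ix j < m}" by auto
  have card: "card {column j U | j. ix j < m} = m"
    unfolding S using card_image[OF inj_on_subset[OF col_inj[OF U]]] card_ix_less[OF m]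
    by (metis subset_UNIV)
  have "pairwise orthogonal {column j U | j. ix j < m}"
    using orth_cols[OF U] by (auto simp: pairwise_def orthogonal_def)
  moreover have "0 \<notin> {column j U | j. ix j < m}"
    using orth_cols[OF U] by (auto) (metis inner_zero_left zero_neq_one)
  ultimately have "independent {column j U | j. ix j < m}"
    by (rule pairwise_orthogonal_independent)
  then show ?thesis using card by (simp add: dim_eq_card_independent)
qed

lemma flag_in_flags:
  fixes U :: "real^('n::{finite,wellorder})^('n::{finite,wellorder})" and ns :: "'d::{finite,wellorder} \<Rightarrow> nat"
  assumes U: "orthogonal_matrix U" and ns: "strict_mono ns" and nsb: "\<And>k. ns k < CARD('n)"
  shows "flag_of ns U \<in> flags ns"
  unfolding flags_def
proof (intro CollectI conjI allI impI)
  fix k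
  show "subspace (flag_of ns U k)" by (simp add: flag_of_ix)
  show "dim (flag_of ns U k) = ns k"
    unfolding flag_of_ix using dim_cols[OF U, of "ns k"] nsb[of k] by simp
next
  fix j k :: 'd assume jk: "j < k"
  then have "ns j < ns k" using ns by (simp add: strict_mono_less)
  then have "flag_of ns U j \<subseteq> flag_of ns U k"
    unfolding flag_of_ix by (intro span_mono) auto
  moreover have "dim (flag_of ns U j) \<noteq> dim (flag_of ns U k)"
    unfolding flag_of_ix using dim_cols[OF U, of "ns j"] dim_cols[OF U, of "ns k"] nsb[of j] nsb[of k] \<open>ns j < ns k\<close>
    by simp
  ultimately show "flag_of ns U j \<subset> flag_of ns U k" by auto
qed




lemma flags_sub:
  fixes ns :: "'d::{finite,wellorder} \<Rightarrow> nat" and V :: "'d \<Rightarrow> (real^('n::{finite,wellorder})) set"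
  assumes V: "V \<in> flags ns" and le: "j \<le> k"
  shows "V j \<subseteq> V k"
  using V le unfolding flags_def by (cases "j = k") (auto simp: order.order_iff_strict)

lemma basis_list:
  fixes ns :: "'d::{finite,wellorder} \<Rightarrow> nat" and V :: "'d \<Rightarrow> (real^('n::{finite,wellorder})) set"
  assumes V: "V \<in> flags ns"
  shows "m \<le> CARD('n) \<Longrightarrow> \<exists>bs. length bs = m \<and> (\<forall>i<m. norm (bs!i) = 1) \<and> (\<forall>i<m. \<forall>j<m. i \<noteq> j \<longrightarrow> bs!i \<bullet> bs!j = 0)
      \<and> (\<forall>i<m. \<forall>k. i < ns k \<longrightarrow> bs!i \<in> V k)"
proof (induction m)
  case 0
  show ?case by simp
next
  case (Suc m)
  then obtain bs where len: "length bs = m" and nb: "\<forall>i<m. norm (bs!i) = 1"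
    and ob: "\<forall>i<m. \<forall>j<m. i \<noteq> j \<longrightarrow> bs!i \<bullet> bs!j = 0" and vb: "\<forall>i<m. \<forall>k. i < ns k \<longrightarrow> bs!i \<in> V k"
    by auto
  have mlt: "m < CARD('n)" using Suc.prems by simp
  have Vsub: "\<And>k. subspace (V k)" and Vdim: "\<And>k. dim (V k) = ns k" using V by (auto simp: flags_def)
  have dimbs: "dim (set bs) \<le> m"
    using dim_le_card[of "set bs" "set bs"] card_length[of bs] len by (simp add: span_superset)
  obtain x where x0: "x \<noteq> 0" and xo: "\<And>y. y \<in> span (set bs) \<Longrightarrow> orthogonal x y"
    and xV: "\<And>k. m < ns k \<Longrightarrow> x \<in> V k"
  proof (cases "\<exists>k. m < ns k")
    case True
    define k0 where "k0 = (LEAST k. m < ns k)"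
    have k0: "m < ns k0" unfolding k0_def using True by (metis LeastI)
    have sub: "set bs \<subseteq> V k0"
      using vb k0 len by (auto simp: in_set_conv_nth)
    have "span (set bs) \<subseteq> span (V k0)" using sub by (rule span_mono)
    moreover have "dim (span (set bs)) \<noteq> dim (span (V k0))"
      using dimbs k0 Vdim[of k0] by simp
    ultimately have "span (set bs) \<subset> span (V k0)" by (metis dim_span psubsetI)
    then obtain x where "x \<noteq> 0" "x \<in> span (V k0)" "\<And>y. y \<in> span (set bs) \<Longrightarrow> orthogonal x y"
      by (rule orthogonal_to_subspace_exists_gen) blast
    moreover have "x \<in> V k" if "m < ns k" for k
    proof -
      have "k0 \<le> k" unfolding k0_def using that by (rule Least_le)
      then have "V k0 \<subseteq> V k" by (rule flags_sub[OF V])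
      then show ?thesis using \<open>x \<in> span (V k0)\<close> Vsub[of k0] by (metis span_eq_iff subsetD)
    qed
    ultimately show ?thesis using that by blast
  next
    case False
    have "dim (set bs) < DIM(real^('n::{finite,wellorder}))" using dimbs mlt by simp
    then obtain x where "x \<noteq> 0" "\<And>y. y \<in> span (set bs) \<Longrightarrow> orthogonal x y"
      by (rule orthogonal_to_subspace_exists) blast
    then show ?thesis using that False by blast
  qed
  define x' where "x' = (1 / norm x) *\<^sub>R x"
  have nx': "norm x' = 1" using x0 by (simp add: x'_def)
  have ox': "bs!i \<bullet> x' = 0" if "i < m" for i
  proof -
    have "bs!i \<in> span (set bs)" using that len by (intro span_base) simp
    then have "orthogonal x (bs!i)" using xo by blast
    then show ?thesis by (simp add: x'_def orthogonal_def inner_commute)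
  qed
  have vx': "x' \<in> V k" if "m < ns k" for k
    using xV[OF that] Vsub[of k] by (simp add: x'_def subspace_mul)
  show ?case
  proof (intro exI[of _ "bs @ [x']"] conjI allI impI)
    show "length (bs @ [x']) = Suc m" using len by simp
  next
    fix i assume "i < Suc m"
    then show "norm ((bs @ [x']) ! i) = 1"
      using nb nx' len by (cases "i < m") (auto simp: nth_append)
  next
    fix i j assume "i < Suc m" "j < Suc m" "i \<noteq> j"
    then show "(bs @ [x']) ! i \<bullet> (bs @ [x']) ! j = 0"
      using ob ox' len by (cases "i < m"; cases "j < m") (auto simp: nth_append inner_commute)
  next
    fix i k assume "i < Suc m" "i < ns k"
    then show "(bs @ [x']) ! i \<in> V k"
      using vb vx' len by (cases "i < m") (auto simp: nth_append)
  qed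
qed

lemma flags_surj:
  fixes ns :: "'d::{finite,wellorder} \<Rightarrow> nat" and V :: "'d \<Rightarrow> (real^('n::{finite,wellorder})) set"
  assumes V: "V \<in> flags ns" and nsb: "\<And>k. ns k < CARD('n)"
  shows "\<exists>U::real^('n::{finite,wellorder})^('n::{finite,wellorder}). orthogonal_matrix U \<and> flag_of ns U = V"
proof -
  obtain bs where bs: "length bs = CARD('n) \<and> (\<forall>i<CARD('n). norm (bs!i) = 1)
    \<and> (\<forall>i<CARD('n). \<forall>j<CARD('n). i \<noteq> j \<longrightarrow> bs!i \<bullet> bs!j = 0)
    \<and> (\<forall>i<CARD('n). \<forall>k. i < ns k \<longrightarrow> bs!i \<in> V k)"
    using basis_list[OF V order_refl] by (elim exE) (rule that)
  have nb: "\<forall>i<CARD('n). norm (bs!i) = 1" using bs by (elim conjE)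
  have ob: "\<forall>i<CARD('n). \<forall>j<CARD('n). i \<noteq> j \<longrightarrow> bs!i \<bullet> bs!j = 0" using bs by (elim conjE)
  have vb: "\<forall>i<CARD('n). \<forall>k. i < ns k \<longrightarrow> bs!i \<in> V k" using bs by (elim conjE)
  define U :: "real^('n::{finite,wellorder})^('n::{finite,wellorder})" where "U = (\<chi> r c. (bs ! ix c) $ r)"
  have col: "column c U = bs ! ix c" for c by (simp add: U_def column_def)
  have U: "orthogonal_matrix U"
    unfolding orthogonal_matrix_orthonormal_columns col orthogonal_def
  proof (intro conjI allI impI)
    fix i :: 'n show "norm (bs ! ix i) = 1" using nb ix_bound[of i] by simp
  next
    fix i j :: 'n assume "i \<noteq> j"
    then have "ix i \<noteq> ix j" using ix_inj by (meson injD)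
    then show "bs ! ix i \<bullet> bs ! ix j = 0" by (rule ob[rule_format, OF ix_bound ix_bound])
  qed
  have Vsub: "\<And>k. subspace (V k)" and Vdim: "\<And>k. dim (V k) = ns k" using V by (auto simp: flags_def)
  have "flag_of ns U k = V k" for k
  proof (rule subspace_dim_equal)
    show "subspace (flag_of ns U k)" by (simp add: flag_of_ix)
    show "subspace (V k)" by (rule Vsub)
    have "{column j U | j. ix j < ns k} \<subseteq> V k"
    proof
      fix y assume "y \<in> {column j U | j. ix j < ns k}"
      then obtain j where "y = column j U" "ix j < ns k" by blast
      then show "y \<in> V k" using vb ix_bound[of j] by (simp add: col)
    qed
    then show "flag_of ns U k \<subseteq> V k"
      unfolding flag_of_ix using Vsub[of k] by (rule span_minimal)
    show "dim (V k) \<le> dim (flag_of ns U k)"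
      unfolding flag_of_ix using dim_cols[OF U, of "ns k"] nsb[of k] Vdim[of k] by simp
  qed
  then show ?thesis using U by blast
qed




definition outer :: "real^'n \<Rightarrow> real^'n \<Rightarrow> real^'n^'n" where
  "outer a b = (\<chi> i j. a$i * b$j)"

lemma outer_mv: "outer a b *v x = (b \<bullet> x) *\<^sub>R a"
  by (simp add: outer_def vec_eq_iff matrix_vector_mult_def inner_vec_def sum_distrib_left mult_ac)

lemma mv_scaleR: "(k *\<^sub>R A) *v x = k *\<^sub>R (A *v (x::real^'n))"
  by (simp add: vec_eq_iff matrix_vector_mult_def sum_distrib_left mult_ac)

definition rotm :: "real^'n \<Rightarrow> real^'n \<Rightarrow> real \<Rightarrow> real^'n^'n" where
  "rotm c w t = mat 1 - (outer c c + outer w w) + cos t *\<^sub>R (outer c c + outer w w) + sin t *\<^sub>R (outer w c - outer c w)"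

lemma rotm_mv: "rotm c w t *v x = x + ((cos t - 1) * (c \<bullet> x) - sin t * (w \<bullet> x)) *\<^sub>R c + (sin t * (c \<bullet> x) + (cos t - 1) * (w \<bullet> x)) *\<^sub>R w"
  by (simp add: rotm_def matrix_vector_mult_add_rdistrib matrix_vector_mult_diff_rdistrib
      mv_scaleR outer_mv algebra_simps scaleR_left_diff_distrib)

lemma inner_expand3:
  fixes x y c w :: "'a::real_inner"
  assumes c: "c \<bullet> c = 1" and w: "w \<bullet> w = 1" and cw: "c \<bullet> w = 0"
  shows "(x + A *\<^sub>R c + B *\<^sub>R w) \<bullet> (y + A' *\<^sub>R c + B' *\<^sub>R w)
    = x \<bullet> y + A' * (c \<bullet> x) + B' * (w \<bullet> x) + A * (c \<bullet> y) + A * A' + B * (w \<bullet> y) + B * B'"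
proof -
  have wc: "w \<bullet> c = 0" using cw by (simp add: inner_commute)
  show ?thesis
    by (simp only: inner_add_left inner_add_right inner_scaleR_left inner_scaleR_right c w cw wc
        inner_commute[of x c] inner_commute[of x w]) (simp add: algebra_simps)
qed

lemma rotm_inner:
  assumes c: "c \<bullet> c = 1" and w: "w \<bullet> w = 1" and cw: "c \<bullet> w = 0"
  shows "(rotm c w t *v x) \<bullet> (rotm c w t *v y) = x \<bullet> y"
proof -
  define p where "p = c \<bullet> x"
  define q where "q = w \<bullet> x"
  define p' where "p' = c \<bullet> y"
  define q' where "q' = w \<bullet> y"
  define C where "C = cos t"
  define S where "S = sin t"
  have SC: "S * S + C * C = 1" unfolding S_def C_def by (metis sin_cos_squared_add power2_eq_square)
  have "(rotm c w t *v x) \<bullet> (rotm c w t *v y)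
     = x \<bullet> y + ((C - 1) * p' - S * q') * p + (S * p' + (C - 1) * q') * q
       + ((C - 1) * p - S * q) * p' + ((C - 1) * p - S * q) * ((C - 1) * p' - S * q')
       + (S * p + (C - 1) * q) * q' + (S * p + (C - 1) * q) * (S * p' + (C - 1) * q')"
    unfolding rotm_mv inner_expand3[OF c w cw] p_def q_def p'_def q'_def C_def S_def by (rule refl)
  also have "\<dots> = x \<bullet> y + (p * p' + q * q') * (2 * (C - 1) + (C - 1) * (C - 1) + S * S)"
    by (simp add: algebra_simps)
  also have "\<dots> = x \<bullet> y"
    using SC by (simp add: algebra_simps)
  finally show ?thesis .
qed

lemma rotm_orth:
  assumes c: "c \<bullet> c = 1" and w: "w \<bullet> w = 1" and cw: "c \<bullet> w = 0"
  shows "orthogonal_matrix (rotm c w t)"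
proof -
  have "orthogonal_transformation (\<lambda>x. rotm c w t *v x)"
    unfolding orthogonal_transformation_def
    using rotm_inner[OF c w cw] by (simp add: matrix_vector_mul_linear)
  then show ?thesis
    using orthogonal_transformation_matrix[of "\<lambda>x. rotm c w t *v x"] by simp
qed

lemma rotm_0: "rotm c w 0 = mat 1"
  by (simp add: rotm_def)




lemma rotm_c:
  assumes c: "c \<bullet> c = 1" and cw: "c \<bullet> w = 0"
  shows "rotm c w t *v c = cos t *\<^sub>R c + sin t *\<^sub>R w"
  using cw by (simp add: rotm_mv c inner_commute[of w c] algebra_simps)

lemma rotm_fix:
  assumes "c \<bullet> y = 0" "w \<bullet> y = 0"
  shows "rotm c w t *v y = y"
  using assms by (simp add: rotm_mv)

lemma rot_exists:
  fixes c c' :: "real^'n" and F :: "(real^'n) set"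
  assumes c: "norm c = 1" and c': "norm c' = 1" and Fc: "\<forall>y\<in>F. c \<bullet> y = 0" and Fc': "\<forall>y\<in>F. c' \<bullet> y = 0"
    and fin: "finite F" and card: "card F + 2 \<le> CARD('n)"
  obtains w \<theta> where "w \<bullet> w = 1" "c \<bullet> w = 0" "\<forall>y\<in>F. w \<bullet> y = 0" "rotm c w \<theta> *v c = c'"
proof -
  have cc: "c \<bullet> c = 1" and cc': "c' \<bullet> c' = 1" using c c' by (simp_all add: norm_eq_1)
  define a where "a = c \<bullet> c'"
  define z where "z = c' - a *\<^sub>R c"
  have zz: "z \<bullet> z = 1 - a * a"
    by (simp add: z_def inner_diff_left inner_diff_right cc cc' a_def inner_commute[of c' c])
  have cz: "c \<bullet> z = 0" by (simp add: z_def inner_diff_right cc a_def)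
  have Fz: "\<forall>y\<in>F. z \<bullet> y = 0" using Fc Fc' by (simp add: z_def inner_diff_left)
  obtain w b where w: "w \<bullet> w = 1" "c \<bullet> w = 0" "\<forall>y\<in>F. w \<bullet> y = 0" and ab: "a\<^sup>2 + b\<^sup>2 = 1"
    and c'eq: "c' = a *\<^sub>R c + b *\<^sub>R w"
  proof (cases "z = 0")
    case False
    define w where "w = (1 / norm z) *\<^sub>R z"
    have nz: "norm z \<noteq> 0" using False by simp
    have "w \<bullet> w = 1" using nz by (simp add: w_def flip: power2_norm_eq_inner power2_eq_square)
    moreover have "c \<bullet> w = 0" by (simp add: w_def cz)
    moreover have "\<forall>y\<in>F. w \<bullet> y = 0" using Fz by (simp add: w_def)
    moreover have "a\<^sup>2 + (norm z)\<^sup>2 = 1"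
    proof -
      have "(norm z)\<^sup>2 = 1 - a * a" using zz by (simp add: power2_norm_eq_inner)
      then show ?thesis by (simp add: power2_eq_square)
    qed
    moreover have "c' = a *\<^sub>R c + norm z *\<^sub>R w" using nz by (simp add: w_def z_def)
    ultimately show ?thesis using that by blast
  next
    case True
    have "dim (insert c F) \<le> card (insert c F)"
      using fin by (intro dim_le_card) (auto intro: span_base)
    also have "\<dots> \<le> card F + 1" using fin by (simp add: card_insert_if)
    also have "\<dots> < DIM(real^'n)" using card by simp
    finally obtain x where x0: "x \<noteq> 0" and xo: "\<And>y. y \<in> span (insert c F) \<Longrightarrow> orthogonal x y"
      by (rule orthogonal_to_subspace_exists) blast
    define w where "w = (1 / norm x) *\<^sub>R x"
    have "w \<bullet> w = 1" using x0 by (simp add: w_def flip: power2_norm_eq_inner power2_eq_square)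
    moreover have "c \<bullet> w = 0" using xo[of c] by (simp add: w_def span_base orthogonal_def inner_commute)
    moreover have "\<forall>y\<in>F. w \<bullet> y = 0" using xo by (simp add: w_def span_base orthogonal_def)
    moreover have "c' = a *\<^sub>R c" using True by (simp add: z_def)
    moreover then have "a\<^sup>2 + 0\<^sup>2 = 1" using cc' cc by (simp add: power2_eq_square)
    ultimately show ?thesis using that[of w 0] by simp
  qed
  obtain \<theta> where "a = cos \<theta>" "b = sin \<theta>" using sincos_total_2pi[OF ab] by metis
  then have "rotm c w \<theta> *v c = c'" using rotm_c[OF cc w(2)] c'eq by simp
  then show ?thesis using that w by blast
qed




lemma mm_add: "(A + B) ** (C::real^'p^'n) = A ** C + B ** C"
  by (simp add: vec_eq_iff matrix_matrix_mult_def sum.distrib algebra_simps)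
lemma mm_diff: "(A - B) ** (C::real^'p^'n) = A ** C - B ** C"
  by (simp add: vec_eq_iff matrix_matrix_mult_def sum_subtractf algebra_simps)
lemma mm_scaleR: "(k *\<^sub>R A) ** (C::real^'p^'n) = k *\<^sub>R (A ** C)"
  by (simp add: vec_eq_iff matrix_matrix_mult_def sum_distrib_left algebra_simps)
lemma mm_col: "column j (A ** (B::real^'p^'n)) = A *v column j B"
  by (simp add: vec_eq_iff matrix_matrix_mult_def matrix_vector_mult_def column_def)

lemma rot_curve_smooth: "smooth_map (\<lambda>t. rotm c w t ** U)"
proof -
  have "(\<lambda>t. rotm c w t ** U) = (\<lambda>t. (mat 1 - (outer c c + outer w w)) ** U + cos t *\<^sub>R ((outer c c + outer w w) ** U) + sin t *\<^sub>R ((outer w c - outer c w) ** U))"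
    by (rule ext) (simp only: rotm_def mm_add mm_diff mm_scaleR)
  then show ?thesis by (simp add: smooth_trig)
qed

lemma connect:
  fixes g :: "real^('n::{finite,wellorder})^('n::{finite,wellorder}) \<Rightarrow> 'b"
  assumes H: "\<And>(W::real \<Rightarrow> real^('n::{finite,wellorder})^('n::{finite,wellorder})) t1 t2. smooth_map W \<Longrightarrow> (\<forall>t. orthogonal_matrix (W t)) \<Longrightarrow> g (W t1) = g (W t2)"
    and Hc: "\<And>U U'. (\<forall>j. ix j < CARD('n) - 1 \<longrightarrow> column j U = column j U') \<Longrightarrow> g U = g U'"
    and U1: "orthogonal_matrix U1"
  shows "\<forall>U. orthogonal_matrix U \<and> (\<forall>j. ix j < CARD('n) - 1 - r \<longrightarrow> column j U = column j U1) \<longrightarrow> g U = g U1"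
proof (induction r)
  case 0
  then show ?case using Hc by auto
next
  case (Suc r)
  show ?case
  proof (cases "CARD('n) - 1 - r = 0")
    case True
    then show ?thesis using Suc.IH by simp
  next
    case False
    define m where "m = CARD('n) - 1 - Suc r"
    have m1: "CARD('n) - 1 - r = Suc m" using False by (simp add: m_def)
    have m2: "m + 2 \<le> CARD('n)" using m1 by simp
    show ?thesis
    proof (intro allI impI, elim conjE)
      fix U assume U: "orthogonal_matrix U" and agr: "\<forall>j. ix j < CARD('n) - 1 - Suc r \<longrightarrow> column j U = column j U1"
      have agr': "\<And>j. ix j < m \<Longrightarrow> column j U = column j U1" using agr by (simp add: m_def)
      have "m < CARD('n)" using m2 by simp
      then obtain j0 :: 'n where j0: "ix j0 = m" using ix_surj by blast
      define c where "c = column j0 U"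
      define c' where "c' = column j0 U1"
      define F where "F = (\<lambda>j. column j U) ` {j. ix j < m}"
      have finF: "finite F" by (simp add: F_def)
      have cardF: "card F + 2 \<le> CARD('n)"
      proof -
        have "card {j::'n. ix j < m} = m" using m2 by (intro card_ix_less) simp
        moreover have "card F \<le> card {j::'n. ix j < m}" unfolding F_def by (rule card_image_le) simp
        ultimately show ?thesis using m2 by simp
      qed
      have Fc: "\<forall>y\<in>F. c \<bullet> y = 0"
        using orth_cols[OF U] j0 by (auto simp: F_def c_def)
      have Fc': "\<forall>y\<in>F. c' \<bullet> y = 0"
        using orth_cols[OF U1] j0 agr' by (auto simp: F_def c'_def)
      have nc: "norm c = 1" "norm c' = 1"
        using U U1 by (auto simp: c_def c'_def orthogonal_matrix_orthonormal_columns)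
      obtain w \<theta> where w: "w \<bullet> w = 1" "c \<bullet> w = 0" "\<forall>y\<in>F. w \<bullet> y = 0" and rc: "rotm c w \<theta> *v c = c'"
        using rot_exists[OF nc Fc Fc' finF cardF] by blast
      have cc: "c \<bullet> c = 1" using nc by (simp add: norm_eq_1)
      define W where "W = (\<lambda>t. rotm c w t ** U)"
      have Wsm: "smooth_map W" unfolding W_def by (rule rot_curve_smooth)
      have Wo: "\<forall>t. orthogonal_matrix (W t)"
        using rotm_orth[OF cc w(1,2)] U by (simp add: W_def orthogonal_matrix_mul)
      have W0: "W 0 = U" by (simp add: W_def rotm_0)
      have "g (W \<theta>) = g U1"
      proof -
        have "column j (W \<theta>) = column j U1" if "ix j < CARD('n) - 1 - r" for j
        proof (cases "ix j < m")
          case True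
          then have "column j U \<in> F" by (simp add: F_def)
          then have "rotm c w \<theta> *v column j U = column j U"
            using Fc w(3) by (intro rotm_fix) auto
          then show ?thesis using agr'[OF True] by (simp add: W_def mm_col)
        next
          case False
          then have "ix j = m" using that m1 by simp
          then have "j = j0" using j0 ix_inj by (metis injD)
          then show ?thesis using rc by (simp add: W_def mm_col c_def c'_def)
        qed
        then show ?thesis using Suc.IH Wo by blast
      qed
      moreover have "g (W 0) = g (W \<theta>)" using H[OF Wsm Wo] .
      ultimately show "g U = g U1" using W0 by simp
    qed
  qed
qed

lemma connect_all:
  fixes g :: "real^('n::{finite,wellorder})^('n::{finite,wellorder}) \<Rightarrow> 'b"
  assumes H: "\<And>(W::real \<Rightarrow> real^('n::{finite,wellorder})^('n::{finite,wellorder})) t1 t2. smooth_map W \<Longrightarrow> (\<forall>t. orthogonal_matrix (W t)) \<Longrightarrow> g (W t1) = g (W t2)"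
    and Hc: "\<And>U U'. (\<forall>j. ix j < CARD('n) - 1 \<longrightarrow> column j U = column j U') \<Longrightarrow> g U = g U'"
    and U: "orthogonal_matrix U"
  shows "g U = g (mat 1)"
proof -
  have "\<forall>U. orthogonal_matrix U \<and> (\<forall>j. ix j < CARD('n) - 1 - (CARD('n) - 1) \<longrightarrow> column j U = column j (mat 1)) \<longrightarrow> g U = g (mat 1)"
  proof (rule connect)
    show "\<And>(W::real \<Rightarrow> real^('n::{finite,wellorder})^('n::{finite,wellorder})) t1 t2. smooth_map W \<Longrightarrow> (\<forall>t. orthogonal_matrix (W t)) \<Longrightarrow> g (W t1) = g (W t2)" by (rule H)
    show "\<And>U U'. (\<forall>j. ix j < CARD('n) - 1 \<longrightarrow> column j U = column j U') \<Longrightarrow> g U = g U'" by (rule Hc)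
    show "orthogonal_matrix (mat 1 :: real^('n::{finite,wellorder})^('n::{finite,wellorder}))" by (rule orthogonal_matrix_id)
  qed
  then show ?thesis using U by simp
qed




lemma same_metric_const:
  fixes ns :: "'d::{finite,wellorder} \<Rightarrow> nat"
    and \<phi> :: "(real^('n::{finite,wellorder})^('n::{finite,wellorder}))^('d::{finite,wellorder}) \<Rightarrow> real^('n::{finite,wellorder})^('n::{finite,wellorder})"
  assumes ns: "strict_mono ns" and nsb: "\<And>k. ns k < CARD('n)"
    and c: "\<forall>V\<in>flags ns. \<phi> (class_emb V) = c"
  shows "same_metric ns (kappa \<phi> \<circ> class_emb) (class_emb :: _ \<Rightarrow> (real^('n::{finite,wellorder})^('n::{finite,wellorder}))^('d::{finite,wellorder}))"
  unfolding same_metric_def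
proof (intro allI impI, elim conjE)
  fix U :: "real \<Rightarrow> real^('n::{finite,wellorder})^('n::{finite,wellorder})" and t
  assume sU: "smooth_map U" and oU: "\<forall>t. orthogonal_matrix (U t)"
  have dE: "(\<lambda>s. class_emb (flag_of ns (U s))) differentiable (at t)"
    using E_diff[of U ns t] oU smooth_diff[OF sU] ns by blast
  have "(\<lambda>s. (kappa \<phi> \<circ> class_emb) (flag_of ns (U s))) = (\<lambda>s. (class_emb (flag_of ns (U s)), c))"
    using c flag_in_flags[OF _ ns nsb] oU by (auto simp: kappa_def)
  then show "induced_sqnorm ns (kappa \<phi> \<circ> class_emb) U t = induced_sqnorm ns class_emb U t"
    unfolding induced_sqnorm_def using vd_pair_const[OF dE] by simp
qed

lemma same_metric_imp_const:
  fixes ns :: "'d::{finite,wellorder} \<Rightarrow> nat"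
    and \<phi> :: "(real^('n::{finite,wellorder})^('n::{finite,wellorder}))^('d::{finite,wellorder}) \<Rightarrow> real^('n::{finite,wellorder})^('n::{finite,wellorder})"
  assumes ns: "strict_mono ns" and nsb: "\<And>k. ns k < CARD('n)" and sm: "smooth_map \<phi>"
    and H: "same_metric ns (kappa \<phi> \<circ> class_emb) (class_emb :: _ \<Rightarrow> (real^('n::{finite,wellorder})^('n::{finite,wellorder}))^('d::{finite,wellorder}))"
  shows "\<exists>c. \<forall>V\<in>flags ns. \<phi> (class_emb V) = c"
proof -
  define g where "g U = \<phi> (class_emb (flag_of ns U))" for U :: "real^('n::{finite,wellorder})^('n::{finite,wellorder})"
  have H': "g (W t1) = g (W t2)"
    if sW: "smooth_map W" and oW: "\<forall>t. orthogonal_matrix (W t)"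
    for W :: "real \<Rightarrow> real^('n::{finite,wellorder})^('n::{finite,wellorder})" and t1 t2
  proof -
    define E where "E s = (class_emb (flag_of ns (W s)) :: (real^('n::{finite,wellorder})^('n::{finite,wellorder}))^('d::{finite,wellorder}))" for s
    have "((\<lambda>s. \<phi> (E s)) has_vector_derivative 0) (at t)" for t
    proof (rule vd_pair_zero[OF sm])
      show dE: "E differentiable (at t)"
        unfolding E_def[abs_def] using E_diff[of W ns t] oW smooth_diff[OF sW] ns by blast
      have "induced_sqnorm ns (kappa \<phi> \<circ> class_emb) W t = induced_sqnorm ns class_emb W t"
        using H sW oW unfolding same_metric_def by blast
      then have "(norm (vector_derivative (\<lambda>s. (E s, \<phi> (E s))) (at t)))\<^sup>2 = (norm (vector_derivative E (at t)))\<^sup>2"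
        unfolding induced_sqnorm_def E_def[abs_def] by (simp add: kappa_def o_def)
      then show "norm (vector_derivative (\<lambda>s. (E s, \<phi> (E s))) (at t)) = norm (vector_derivative E (at t))"
        by (simp add: power2_eq_iff_nonneg)
    qed
    then have "\<phi> (E t1) = \<phi> (E t2)" by (rule zero_deriv_const)
    then show ?thesis by (simp add: g_def E_def)
  qed
  have Hc: "g U = g U'" if agr: "\<forall>j. ix j < CARD('n) - 1 \<longrightarrow> column j U = column j U'"
    for U U' :: "real^('n::{finite,wellorder})^('n::{finite,wellorder})"
  proof -
    have "{column j U | j. ix j < ns k} = {column j U' | j. ix j < ns k}" for k
    proof -
      have "ix j < ns k \<Longrightarrow> column j U = column j U'" for j
        using agr nsb[of k] by auto
      then show ?thesis by (intro Collect_cong ex_cong1) auto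
    qed
    then have "flag_of ns U = flag_of ns U'" by (simp add: flag_of_ix fun_eq_iff)
    then show ?thesis by (simp add: g_def)
  qed
  have "\<phi> (class_emb V) = g (mat 1)" if V: "V \<in> flags ns" for V
  proof -
    obtain U :: "real^('n::{finite,wellorder})^('n::{finite,wellorder})" where U: "orthogonal_matrix U" and UV: "flag_of ns U = V"
      using flags_surj[OF V nsb] by blast
    have "g U = g (mat 1)" by (rule connect_all[OF H' Hc U])
    then show ?thesis using UV by (simp add: g_def)
  qed
  then show ?thesis by blast
qed


lemma same_metric_phi0:
  fixes ns :: "'d::{finite,wellorder} \<Rightarrow> nat"
  assumes ns: "strict_mono ns"
  shows "same_metric ns (kappa (phi0 :: (real^('n::{finite,wellorder})^('n::{finite,wellorder}))^('d::{finite,wellorder}) \<Rightarrow> _) \<circ> class_emb)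
     (mod_emb :: (('d::{finite,wellorder}) \<Rightarrow> (real^('n::{finite,wellorder})) set) \<Rightarrow> _)"
  unfolding same_metric_def
proof (intro allI impI, elim conjE)
  fix U :: "real \<Rightarrow> real^('n::{finite,wellorder})^('n::{finite,wellorder})" and t
  assume oU: "\<forall>t. orthogonal_matrix (U t)"
  have "(\<lambda>s. (kappa phi0 \<circ> class_emb) (flag_of ns (U s))) = (\<lambda>s. mod_emb (flag_of ns (U s)) :: ((real^('n::{finite,wellorder})^('n::{finite,wellorder}))^('d::{finite,wellorder})) \<times> _)"
    using phi0_flag[OF _ ns] oU by blast
  then show "induced_sqnorm ns (kappa phi0 \<circ> class_emb) U t = induced_sqnorm ns mod_emb U t"
    unfolding induced_sqnorm_def by simp
qed

theorem proposition5p2: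
  fixes ns :: "'d::{finite,wellorder} \<Rightarrow> nat"
  assumes "strict_mono ns"
    and "\<And>k. 0 < ns k"
    and "\<And>k. ns k < CARD('n::{finite,wellorder})"
  shows "(\<forall>\<phi> :: (real^('n::{finite,wellorder})^('n::{finite,wellorder}))^('d::{finite,wellorder}) \<Rightarrow> real^('n::{finite,wellorder})^('n::{finite,wellorder}).
            smooth_map \<phi> \<longrightarrow>
            (same_metric ns (kappa \<phi> \<circ> class_emb) class_emb \<longleftrightarrow>
             (\<exists>c. \<forall>V \<in> flags ns. \<phi> (class_emb V) = c)))
       \<and> (\<forall>c :: real^('n::{finite,wellorder})^('n::{finite,wellorder}).
            same_metric ns (kappa (\<lambda>_. c) \<circ> class_emb) (class_emb :: _ \<Rightarrow> (real^('n::{finite,wellorder})^('n::{finite,wellorder}))^('d::{finite,wellorder})))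
       \<and> (\<exists>\<phi> :: (real^('n::{finite,wellorder})^('n::{finite,wellorder}))^('d::{finite,wellorder}) \<Rightarrow> real^('n::{finite,wellorder})^('n::{finite,wellorder}).
            smooth_map \<phi> \<and>
            same_metric ns (kappa \<phi> \<circ> class_emb) (mod_emb :: (('d::{finite,wellorder}) \<Rightarrow> (real^('n::{finite,wellorder})) set) \<Rightarrow> _))"
proof (intro conjI allI impI)
  fix \<phi> :: "(real^('n::{finite,wellorder})^('n::{finite,wellorder}))^('d::{finite,wellorder}) \<Rightarrow> real^('n::{finite,wellorder})^('n::{finite,wellorder})"
  assume sm: "smooth_map \<phi>"
  show "same_metric ns (kappa \<phi> \<circ> class_emb) class_emb \<longleftrightarrow> (\<exists>c. \<forall>V \<in> flags ns. \<phi> (class_emb V) = c)"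
  proof
    assume "same_metric ns (kappa \<phi> \<circ> class_emb) class_emb"
    then show "\<exists>c. \<forall>V \<in> flags ns. \<phi> (class_emb V) = c"
      by (rule same_metric_imp_const[OF assms(1) assms(3) sm])
  next
    assume "\<exists>c. \<forall>V \<in> flags ns. \<phi> (class_emb V) = c"
    then obtain c where "\<forall>V \<in> flags ns. \<phi> (class_emb V) = c" by blast
    then show "same_metric ns (kappa \<phi> \<circ> class_emb) class_emb"
      by (rule same_metric_const[OF assms(1) assms(3)])
  qed
next
  fix c :: "real^('n::{finite,wellorder})^('n::{finite,wellorder})"
  show "same_metric ns (kappa (\<lambda>_. c) \<circ> class_emb) (class_emb :: _ \<Rightarrow> (real^('n::{finite,wellorder})^('n::{finite,wellorder}))^('d::{finite,wellorder}))"
    by (rule same_metric_const[OF assms(1) assms(3), where c=c]) simp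
next
  show "\<exists>\<phi> :: (real^('n::{finite,wellorder})^('n::{finite,wellorder}))^('d::{finite,wellorder}) \<Rightarrow> real^('n::{finite,wellorder})^('n::{finite,wellorder}).
            smooth_map \<phi> \<and>
            same_metric ns (kappa \<phi> \<circ> class_emb) (mod_emb :: (('d::{finite,wellorder}) \<Rightarrow> (real^('n::{finite,wellorder})) set) \<Rightarrow> _)"
    using smooth_phi0 same_metric_phi0[OF assms(1)] by blast
qed


end
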